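(* For every integer $m\ge 4$, the commuting graph $\Gamma(H_m)$ of the group $H_m$ defined below is connected.
   Context: For an integer $m\ge 3$, let $V_m$ and $W_m$ be vector spaces over $\mathrm{GF}(2)$ of dimensions $m$ and $m-2$, with ordered bases $x_1,\dots,x_m$ and $y_1,\dots,y_{m-2}$ respectively. Let $f_m:V_m\times V_m\to W_m$ be the bilinear map determined on basis vectors by $f_m(x_i,x_j)=0$ if $j\in\{i,i+1\}$, $f_m(x_i,x_j)=y_{j-i-1}$ if $i+2\le j\le m$, and $f_m(x_i,x_j)=0$ if $i>j$. The group $H_m$ has underlying set $V_m\times W_m$ with multiplication $(a,b)\cdot(c,d)=(a+c,\ f_m(a,c)+b+d)$. For a group $G$, the commuting graph $\Gamma(G)$ is the graph whose vertices are the non-central elements of $G$, two distinct vertices being adjacent if and only if they commute in $G$. *)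

theory Defs
  imports "HOL-Library.Z2" "HOL-Algebra.Group"
begin

text \<open>V_m: coordinates supported in {1..m} (coefficients of x_1..x_m);
  W_m: coordinates supported in {1..m-2} (coefficients of y_1..y_(m-2)).\<close>

definition Vsp :: "nat \<Rightarrow> (nat \<Rightarrow> bit) set" where
  "Vsp m = {a. \<forall>i. a i \<noteq> 0 \<longrightarrow> i \<in> {1..m}}"

definition Wsp :: "nat \<Rightarrow> (nat \<Rightarrow> bit) set" where
  "Wsp m = {b. \<forall>k. b k \<noteq> 0 \<longrightarrow> k \<in> {1..m-2}}"

definition vadd :: "(nat \<Rightarrow> bit) \<Rightarrow> (nat \<Rightarrow> bit) \<Rightarrow> (nat \<Rightarrow> bit)" where
  "vadd a c = (\<lambda>i. a i + c i)"

definition ybasis :: "nat \<Rightarrow> (nat \<Rightarrow> bit)" where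
  "ybasis k = (\<lambda>l. if l = k then 1 else 0)"

definition fbasis :: "nat \<Rightarrow> nat \<Rightarrow> nat \<Rightarrow> (nat \<Rightarrow> bit)" where
  "fbasis m i j = (if i + 2 \<le> j \<and> j \<le> m then ybasis (j - i - 1) else (\<lambda>_. 0))"

definition fm :: "nat \<Rightarrow> (nat \<Rightarrow> bit) \<Rightarrow> (nat \<Rightarrow> bit) \<Rightarrow> (nat \<Rightarrow> bit)" where
  "fm m a c = (\<lambda>k. \<Sum>i\<in>{1..m}. \<Sum>j\<in>{1..m}. a i * c j * fbasis m i j k)"

definition Hgrp :: "nat \<Rightarrow> ((nat \<Rightarrow> bit) \<times> (nat \<Rightarrow> bit)) monoid" where
  "Hgrp m = \<lparr> carrier = Vsp m \<times> Wsp m,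
             mult = (\<lambda>(a, b) (c, d). (vadd a c, vadd (vadd (fm m a c) b) d)),
             one = ((\<lambda>_. 0), (\<lambda>_. 0)) \<rparr>"

definition grp_center :: "('a, 'b) monoid_scheme \<Rightarrow> 'a set" where
  "grp_center G = {z \<in> carrier G. \<forall>g \<in> carrier G. z \<otimes>\<^bsub>G\<^esub> g = g \<otimes>\<^bsub>G\<^esub> z}"

definition cg_vertices :: "('a, 'b) monoid_scheme \<Rightarrow> 'a set" where
  "cg_vertices G = carrier G - grp_center G"

definition cg_adj :: "('a, 'b) monoid_scheme \<Rightarrow> 'a \<Rightarrow> 'a \<Rightarrow> bool" where
  "cg_adj G x y \<longleftrightarrow> x \<in> cg_vertices G \<and> y \<in> cg_vertices G \<and> x \<noteq> y
                    \<and> x \<otimes>\<^bsub>G\<^esub> y = y \<otimes>\<^bsub>G\<^esub> x"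

definition graph_connected :: "'a set \<Rightarrow> ('a \<Rightarrow> 'a \<Rightarrow> bool) \<Rightarrow> bool" where
  "graph_connected Vs E \<longleftrightarrow> Vs \<noteq> {} \<and> (\<forall>u\<in>Vs. \<forall>v\<in>Vs. E\<^sup>*\<^sup>* u v)"

end

theory Submission
  imports Defs
begin
declare add_bit_eq_xor[simp del] mult_bit_eq_and[simp del]

lemma bit_sum0: "(x::bit) + y = 0 \<longleftrightarrow> x = y"
  by (cases x; cases y) (simp_all add: add_bit_eq_xor)

lemma mult_H: "(a,b) \<otimes>\<^bsub>Hgrp m\<^esub> (c,d) = (vadd a c, vadd (vadd (fm m a c) b) d)"
  by (simp add: Hgrp_def)

lemma comm_iff: "((a,b) \<otimes>\<^bsub>Hgrp m\<^esub> (c,d) = (c,d) \<otimes>\<^bsub>Hgrp m\<^esub> (a,b)) \<longleftrightarrow> fm m a c = fm m c a"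
  by (auto simp add: mult_H vadd_def fun_eq_iff add.commute add.left_commute)

lemma fm_zero1: "fm m (\<lambda>_. 0) c = (\<lambda>_. 0)" by (simp add: fm_def)
lemma fm_zero2: "fm m c (\<lambda>_. 0) = (\<lambda>_. 0)" by (simp add: fm_def)

lemma fm_add2: "fm m a (vadd c c') = vadd (fm m a c) (fm m a c')"
  by (simp add: fm_def vadd_def fun_eq_iff distrib_left distrib_right sum.distrib)
lemma fm_add1: "fm m (vadd c c') a = vadd (fm m c a) (fm m c' a)"
  by (simp add: fm_def vadd_def fun_eq_iff distrib_left distrib_right sum.distrib)

definition supp_in :: "nat set \<Rightarrow> (nat \<Rightarrow> bit) set" where
  "supp_in A = {c. \<forall>i. c i \<noteq> 0 \<longrightarrow> i \<in> A}"

lemma card_supp_in: assumes "finite A" shows "card (supp_in A) = 2 ^ card A"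
proof -
  have "bij_betw (\<lambda>c. {i. c i \<noteq> 0}) (supp_in A) (Pow A)"
  proof (rule bij_betwI[where g="\<lambda>B i. if i \<in> B then 1 else 0"])
    show "(\<lambda>c. {i. c i \<noteq> 0}) \<in> supp_in A \<rightarrow> Pow A" by (auto simp: supp_in_def)
    show "(\<lambda>B i. if i \<in> B then 1 else 0) \<in> Pow A \<rightarrow> supp_in A"
      by (auto simp: supp_in_def split: if_splits)
    show "\<And>x. x \<in> supp_in A \<Longrightarrow> (\<lambda>i. if i \<in> {i. x i \<noteq> 0} then 1 else 0) = x"
      by (auto simp: fun_eq_iff)
    show "\<And>y. y \<in> Pow A \<Longrightarrow> {i. (if i \<in> y then 1 else 0) \<noteq> (0::bit)} = y" by auto
  qed
  then show ?thesis using card_Pow[of A] assms bij_betw_same_card by metis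
qed

lemma finite_supp_in: assumes "finite A" shows "finite (supp_in A)"
  using card_supp_in[OF assms] by (metis card.infinite power_not_zero zero_neq_numeral)

lemma Vsp_eq: "Vsp m = supp_in {1..m}" by (simp add: Vsp_def supp_in_def)
lemma Wsp_eq: "Wsp m = supp_in {1..m-2}" by (simp add: Wsp_def supp_in_def)

lemma fm_vanish:
  assumes "a \<in> supp_in {l..h}" "c \<in> supp_in {l..h}" "\<not> (1 \<le> k \<and> k + l + 1 \<le> h)"
  shows "fm m a c k = 0"
  unfolding fm_def
proof (intro sum.neutral ballI)
  fix i j assume "i \<in> {1..m}" "j \<in> {1..m}"
  show "a i * c j * fbasis m i j k = 0"
  proof (cases "a i = 0 \<or> c j = 0")
    case True then show ?thesis by auto
  next
    case False
    then have "i \<in> {l..h}" "j \<in> {l..h}" using assms(1,2) by (auto simp: supp_in_def)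
    then show ?thesis using assms(3) by (auto simp: fbasis_def ybasis_def)
  qed
qed

lemma pigeon:
  assumes a: "a \<in> supp_in {l..h}" and lh: "l + 2 \<le> h"
  shows "\<exists>d \<in> supp_in {l..h-1}. d \<noteq> (\<lambda>_. 0) \<and> fm m a d = fm m d a"
proof -
  define S where "S = supp_in {l..h-1}"
  define T where "T = supp_in {1..h-l-1}"
  define \<phi> where "\<phi> = (\<lambda>c. vadd (fm m a c) (fm m c a))"
  have SS: "S \<subseteq> supp_in {l..h}" by (auto simp: S_def supp_in_def)
  have img: "\<phi> ` S \<subseteq> T"
  proof
    fix w assume "w \<in> \<phi> ` S"
    then obtain c where c: "c \<in> S" "w = \<phi> c" by auto
    have cc: "c \<in> supp_in {l..h}" using c SS by auto
    show "w \<in> T" unfolding T_def supp_in_def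
    proof (intro CollectI allI impI)
      fix k assume "w k \<noteq> 0"
      then have "fm m a c k \<noteq> 0 \<or> fm m c a k \<noteq> 0" using c by (auto simp: \<phi>_def vadd_def)
      then have "1 \<le> k \<and> k + l + 1 \<le> h" using fm_vanish[OF a cc] fm_vanish[OF cc a] by blast
      then show "k \<in> {1..h-l-1}" by auto
    qed
  qed
  have "card S = 2 ^ (h - l)" using card_supp_in[of "{l..h-1}"] lh by (simp add: S_def)
  moreover have "card T = 2 ^ (h - l - 1)" using card_supp_in[of "{1..h-l-1}"] by (simp add: T_def)
  moreover have "(2::nat) ^ (h - l - 1) < 2 ^ (h - l)" using lh by simp
  ultimately have "\<not> inj_on \<phi> S"
    using card_inj_on_le[OF _ img] finite_supp_in[of "{1..h-l-1}"] by (force simp: T_def)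
  then obtain c c' where cc: "c \<in> S" "c' \<in> S" "c \<noteq> c'" "\<phi> c = \<phi> c'"
    unfolding inj_on_def by blast
  define d where "d = vadd c c'"
  have "d \<in> S" unfolding S_def supp_in_def
  proof (intro CollectI allI impI)
    fix i assume "d i \<noteq> 0"
    then have "c i \<noteq> 0 \<or> c' i \<noteq> 0" by (auto simp: d_def vadd_def)
    then show "i \<in> {l..h-1}" using cc by (auto simp: S_def supp_in_def)
  qed
  moreover have "d \<noteq> (\<lambda>_. 0)"
  proof
    assume "d = (\<lambda>_. 0)"
    then have "\<forall>i. c i + c' i = 0" by (auto simp: d_def vadd_def fun_eq_iff)
    then have "c = c'" by (auto simp: fun_eq_iff bit_sum0)
    then show False using cc by simp
  qed
  moreover have "fm m a d = fm m d a"
  proof -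
    have "\<phi> d = vadd (\<phi> c) (\<phi> c')"
      unfolding \<phi>_def d_def fm_add1 fm_add2 by (simp add: vadd_def fun_eq_iff add_ac)
    also have "\<dots> = (\<lambda>_. 0)" using cc by (simp add: vadd_def bit_sum0)
    finally show ?thesis by (auto simp: \<phi>_def vadd_def fun_eq_iff bit_sum0)
  qed
  ultimately show ?thesis by (auto simp: S_def)
qed


lemma fm_sing1: "fm m (ybasis p) c k = (\<Sum>j\<in>{1..m}. (if p \<in> {1..m} then c j * fbasis m p j k else 0))"
proof -
  have "fm m (ybasis p) c k = (\<Sum>i\<in>{1..m}. if i = p then (\<Sum>j\<in>{1..m}. c j * fbasis m p j k) else 0)"
    unfolding fm_def ybasis_def by (intro sum.cong) auto
  also have "\<dots> = (\<Sum>j\<in>{1..m}. (if p \<in> {1..m} then c j * fbasis m p j k else 0))"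
    by (simp only: sum.delta finite_atLeastAtMost) auto
  finally show ?thesis .
qed

lemma fm_sing2: "fm m c (ybasis q) k = (\<Sum>i\<in>{1..m}. (if q \<in> {1..m} then c i * fbasis m i q k else 0))"
proof -
  have "fm m c (ybasis q) k = (\<Sum>i\<in>{1..m}. (\<Sum>j\<in>{1..m}. if j = q then c i * fbasis m i q k else 0))"
    unfolding fm_def ybasis_def by (intro sum.cong) auto
  also have "\<dots> = (\<Sum>i\<in>{1..m}. (if q \<in> {1..m} then c i * fbasis m i q k else 0))"
    by (simp only: sum.delta finite_atLeastAtMost)
  finally show ?thesis .
qed

lemma noncentral:
  assumes m: "m \<ge> 4" and a: "a \<in> Vsp m" and nz: "a \<noteq> (\<lambda>_. 0)"
  shows "\<exists>c \<in> Vsp m. fm m a c \<noteq> fm m c a"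
proof (cases "\<exists>i\<ge>3. a i \<noteq> 0")
  case True
  then obtain i where i: "i \<ge> 3" "a i = 1" by auto
  have im: "i \<le> m" using a i by (auto simp: Vsp_def)
  have e1: "ybasis 1 \<in> Vsp m" using m by (auto simp: Vsp_def ybasis_def)
  have "fm m a (ybasis 1) (i-2) = 0" by (simp add: fm_sing2 fbasis_def)
  moreover have "fm m (ybasis 1) a (i-2) = 1"
  proof -
    have "fm m (ybasis 1) a (i-2) = (\<Sum>j\<in>{1..m}. if j = i then a j else 0)"
      unfolding fm_sing1 using m i
      by (intro sum.cong) (auto simp: fbasis_def ybasis_def)
    also have "\<dots> = 1" using im i by simp
    finally show ?thesis .
  qed
  ultimately show ?thesis using e1 by (metis zero_neq_one)
next
  case False
  then obtain p where p: "p \<in> {1,2}" "a p = 1" using nz a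
    by (auto simp: Vsp_def fun_eq_iff) (metis One_nat_def Suc_1 le_antisym not_less_eq_eq numeral_3_eq_3)
  have em: "ybasis m \<in> Vsp m" using m by (auto simp: Vsp_def ybasis_def)
  have "fm m (ybasis m) a (m-p-1) = 0" by (simp add: fm_sing1 fbasis_def)
  moreover have "fm m a (ybasis m) (m-p-1) = 1"
  proof -
    have "fm m a (ybasis m) (m-p-1) = (\<Sum>i\<in>{1..m}. if i = p then a i else 0)"
      unfolding fm_sing2 using m p False
      by (intro sum.cong) (auto simp: fbasis_def ybasis_def)
    also have "\<dots> = 1" using m p by auto
    finally show ?thesis .
  qed
  ultimately show ?thesis using em by (metis zero_neq_one)
qed


lemma carrier_H: "carrier (Hgrp m) = Vsp m \<times> Wsp m" by (simp add: Hgrp_def)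

lemma vert_iff:
  assumes m: "m \<ge> 4"
  shows "(a,b) \<in> cg_vertices (Hgrp m) \<longleftrightarrow> a \<in> Vsp m \<and> b \<in> Wsp m \<and> a \<noteq> (\<lambda>_. 0)"
proof
  assume v: "(a,b) \<in> cg_vertices (Hgrp m)"
  then have ab: "a \<in> Vsp m" "b \<in> Wsp m" unfolding cg_vertices_def carrier_H by auto
  moreover have "a \<noteq> (\<lambda>_. 0)"
  proof
    assume "a = (\<lambda>_. 0)"
    have car: "(a,b) \<in> carrier (Hgrp m)" using ab by (simp add: carrier_H)
    have "\<forall>g\<in>carrier (Hgrp m). (a,b) \<otimes>\<^bsub>Hgrp m\<^esub> g = g \<otimes>\<^bsub>Hgrp m\<^esub> (a,b)"
    proof
      fix g assume "g \<in> carrier (Hgrp m)"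
      obtain c d where g: "g = (c,d)" by fastforce
      show "(a,b) \<otimes>\<^bsub>Hgrp m\<^esub> g = g \<otimes>\<^bsub>Hgrp m\<^esub> (a,b)"
        unfolding g comm_iff \<open>a = (\<lambda>_. 0)\<close> fm_zero1 fm_zero2 ..
    qed
    then have "(a,b) \<in> grp_center (Hgrp m)"
      using car unfolding grp_center_def by blast
    then show False using v by (simp add: cg_vertices_def)
  qed
  ultimately show "a \<in> Vsp m \<and> b \<in> Wsp m \<and> a \<noteq> (\<lambda>_. 0)" by blast
next
  assume h: "a \<in> Vsp m \<and> b \<in> Wsp m \<and> a \<noteq> (\<lambda>_. 0)"
  then obtain c where c: "c \<in> Vsp m" "fm m a c \<noteq> fm m c a" using noncentral[OF m] by blast
  have "(c, (\<lambda>_. 0)) \<in> carrier (Hgrp m)" using c by (auto simp: carrier_H Wsp_def)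
  then have "(a,b) \<notin> grp_center (Hgrp m)"
    unfolding grp_center_def using c(2) comm_iff by fastforce
  then show "(a,b) \<in> cg_vertices (Hgrp m)" using h by (auto simp: cg_vertices_def carrier_H)
qed

abbreviation "R m \<equiv> (cg_adj (Hgrp m))\<^sup>*\<^sup>*"
abbreviation "z0 \<equiv> (\<lambda>_::nat. 0::bit)"

lemma zero_W: "z0 \<in> Wsp m" by (simp add: Wsp_def)

lemma step:
  assumes m: "m \<ge> 4" and a: "a \<in> Vsp m" "a \<noteq> z0" and c: "c \<in> Vsp m" "c \<noteq> z0"
    and b: "b \<in> Wsp m" and comm: "fm m a c = fm m c a" and r: "R m (c, z0) u"
  shows "R m (a, b) u"
proof (cases "(a,b) = (c,z0)")
  case True then show ?thesis using r by simp
next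
  case False
  have v1: "(a,b) \<in> cg_vertices (Hgrp m)" using vert_iff[OF m] a b by simp
  have v2: "(c,z0) \<in> cg_vertices (Hgrp m)" using vert_iff[OF m, of c z0] c zero_W by simp
  have cm: "(a,b) \<otimes>\<^bsub>Hgrp m\<^esub> (c,z0) = (c,z0) \<otimes>\<^bsub>Hgrp m\<^esub> (a,b)"
    using comm by (simp only: comm_iff)
  have "cg_adj (Hgrp m) (a,b) (c,z0)"
    unfolding cg_adj_def using v1 v2 False cm by simp
  then show ?thesis using r by (rule converse_rtranclp_into_rtranclp)
qed

lemma fm_basis_zero: "q \<le> p + 1 \<Longrightarrow> fm m (ybasis p) (ybasis q) = z0"
  by (auto simp: fm_def fun_eq_iff ybasis_def fbasis_def intro!: sum.neutral)

lemma ybasis_V: "1 \<le> i \<Longrightarrow> i \<le> m \<Longrightarrow> ybasis i \<in> Vsp m"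
  by (auto simp: Vsp_def ybasis_def)
lemma ybasis_nz: "ybasis i \<noteq> z0" by (auto simp: ybasis_def fun_eq_iff)

lemma basis_path:
  assumes m: "m \<ge> 4"
  shows "1 \<le> i \<Longrightarrow> i \<le> m \<Longrightarrow> R m (ybasis i, z0) (ybasis 1, z0)"
proof (induction i)
  case 0 then show ?case by simp
next
  case (Suc i)
  show ?case
  proof (cases "i = 0")
    case True then show ?thesis by simp
  next
    case False
    then have ih: "R m (ybasis i, z0) (ybasis 1, z0)" using Suc by simp
    show ?thesis
      by (rule step[OF m ybasis_V ybasis_nz ybasis_V ybasis_nz zero_W _ ih])
         (use Suc False in \<open>auto simp: fm_basis_zero\<close>)
  qed
qed


lemma narrow1: "a \<in> supp_in {l..h} \<Longrightarrow> h \<le> l + 1 \<Longrightarrow> fm m a (ybasis l) = z0"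
  by (auto simp: fm_def fun_eq_iff ybasis_def fbasis_def supp_in_def intro!: sum.neutral)
lemma narrow2: "a \<in> supp_in {l..h} \<Longrightarrow> h \<le> l + 1 \<Longrightarrow> fm m (ybasis l) a = z0"
  by (auto simp: fm_def fun_eq_iff ybasis_def fbasis_def supp_in_def intro!: sum.neutral)

lemma main_ind:
  assumes m: "m \<ge> 4"
  shows "a \<in> supp_in {l..h} \<Longrightarrow> 1 \<le> l \<Longrightarrow> h \<le> m \<Longrightarrow> a \<noteq> z0 \<Longrightarrow> R m (a, z0) (ybasis 1, z0)"
proof (induction "h - l" arbitrary: l h a rule: less_induct)
  case less
  have aV: "a \<in> Vsp m" using less.prems by (auto simp: Vsp_eq supp_in_def)
  obtain i0 where "a i0 \<noteq> 0" using less.prems(4) by (metis ext)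
  then have "i0 \<in> {l..h}" using less.prems(1) unfolding supp_in_def by blast
  then have lh: "l \<le> h" by simp
  show ?case
  proof (cases "h \<le> l + 1")
    case True
    have c: "fm m a (ybasis l) = fm m (ybasis l) a"
      using narrow1[OF less.prems(1) True] narrow2[OF less.prems(1) True] by simp
    have l1: "1 \<le> l" and lm: "l \<le> m" using less.prems(2,3) lh by auto
    show ?thesis
      by (rule step[OF m aV less.prems(4) ybasis_V[OF l1 lm] ybasis_nz zero_W c basis_path[OF m l1 lm]])
  next
    case False
    have sub: "supp_in {l..h-1} \<subseteq> supp_in {l..h}" by (auto simp: supp_in_def)
    show ?thesis
    proof (cases "a h = 0")
      case True
      have "a \<in> supp_in {l..h-1}"
      proof (unfold supp_in_def, intro CollectI allI impI)
        fix i assume "a i \<noteq> 0"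
        then have "i \<in> {l..h}" "i \<noteq> h" using less.prems(1) True unfolding supp_in_def by auto
        then show "i \<in> {l..h-1}" by auto
      qed
      moreover have "h - 1 - l < h - l" using False by simp
      ultimately show ?thesis using less.hyps[of "h-1" l a] less.prems(2-4) by simp
    next
      case nz: False
      obtain d where d: "d \<in> supp_in {l..h-1}" "d \<noteq> z0" "fm m a d = fm m d a"
        using pigeon[OF less.prems(1)] False by auto
      have "h - 1 - l < h - l" using False by simp
      then have "R m (d, z0) (ybasis 1, z0)" using less.hyps[of "h-1" l d] d less.prems(2-4) by simp
      moreover have "d \<in> Vsp m" using d less.prems by (auto simp: Vsp_eq supp_in_def)
      ultimately show ?thesis using step[OF m aV less.prems(4) _ d(2) zero_W d(3)] by blast
    qed
  qed
qed

lemma R_sym: "R m x y \<Longrightarrow> R m y x"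
proof (induction rule: rtranclp_induct)
  case base then show ?case by simp
next
  case (step y z)
  then have "cg_adj (Hgrp m) z y" unfolding cg_adj_def by (elim conjE) (intro conjI, simp_all)
  then show ?case using step.IH by (rule converse_rtranclp_into_rtranclp)
qed

theorem lemma2p2:
  fixes m :: nat
  assumes "m \<ge> 4"
  shows "graph_connected (cg_vertices (Hgrp m)) (cg_adj (Hgrp m))"
proof -
  have all: "R m u (ybasis 1, z0)" if u: "u \<in> cg_vertices (Hgrp m)" for u
  proof -
    obtain a b where ab: "u = (a,b)" by fastforce
    have h: "a \<in> Vsp m" "b \<in> Wsp m" "a \<noteq> z0" using u unfolding ab vert_iff[OF assms] by auto
    have "R m (a, z0) (ybasis 1, z0)" using main_ind[OF assms, of a 1 m] h assms by (simp add: Vsp_eq)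
    then show ?thesis unfolding ab using step[OF assms h(1) h(3) h(1) h(3) h(2)] by blast
  qed
  have "(ybasis 1, z0) \<in> cg_vertices (Hgrp m)"
    using vert_iff[OF assms] ybasis_V[of 1 m] ybasis_nz zero_W assms by simp
  moreover have "R m u v" if "u \<in> cg_vertices (Hgrp m)" "v \<in> cg_vertices (Hgrp m)" for u v
    using rtranclp_trans[OF all[OF that(1)] R_sym[OF all[OF that(2)]]] .
  ultimately show ?thesis unfolding graph_connected_def by blast
qed

end
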